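(* Let $R$ be a commutative ring with $1\neq 0$, $S\subseteq R$ a multiplicatively closed subset, and $M$ an $S$-comultiplication $R$-module. If $N$ is an $S$-copure submodule of $M$, then for every $s\in S$ the module $M/sN$ is an $S$-comultiplication $R$-module.
   Context: All rings are commutative with $1\neq 0$ and all modules are unital. A multiplicatively closed subset (m.c.s.) $S$ of $R$ is a subset with $0\notin S$, $1\in S$, and $ss'\in S$ for all $s,s'\in S$. For an ideal $I$ and submodule $L$, $(L:_M I)=\{m\in M: Im\subseteq L\}$ and $(0:_M I)=\{m\in M: Im=0\}$. $M$ is an $S$-comultiplication module if for each submodule $N$ of $M$ there exist $s\in S$ and an ideal $I$ of $R$ with $s(0:_M I)\subseteq N\subseteq (0:_M I)$. A submodule $L$ of $M$ is $S$-copure if there exists $s\in S$ such that $s(L:_M I)\subseteq L+(0:_M I)$ for every ideal $I$ of $R$. *)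

theory Defs
  imports "HOL-Algebra.Module" "HOL-Algebra.Ideal" "HOL-Algebra.AbelCoset"
begin

definition mcs :: "('a, 'c) ring_scheme \<Rightarrow> 'a set \<Rightarrow> bool" where
  "mcs R S \<longleftrightarrow> S \<subseteq> carrier R \<and> \<zero>\<^bsub>R\<^esub> \<notin> S \<and> \<one>\<^bsub>R\<^esub> \<in> S \<and>
     (\<forall>s\<in>S. \<forall>t\<in>S. s \<otimes>\<^bsub>R\<^esub> t \<in> S)"

definition smult_set :: "('a, 'b, 'c) module_scheme \<Rightarrow> 'a \<Rightarrow> 'b set \<Rightarrow> 'b set" where
  "smult_set M r X = (\<lambda>x. r \<odot>\<^bsub>M\<^esub> x) ` X"

definition colon :: "('a, 'b, 'c) module_scheme \<Rightarrow> 'b set \<Rightarrow> 'a set \<Rightarrow> 'b set" where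
  "colon M L I = {m \<in> carrier M. \<forall>a\<in>I. a \<odot>\<^bsub>M\<^esub> m \<in> L}"

definition ann :: "('a, 'b, 'c) module_scheme \<Rightarrow> 'a set \<Rightarrow> 'b set" where
  "ann M I = colon M {\<zero>\<^bsub>M\<^esub>} I"

definition S_comultiplication ::
  "('a, 'd) ring_scheme \<Rightarrow> 'a set \<Rightarrow> ('a, 'b, 'c) module_scheme \<Rightarrow> bool" where
  "S_comultiplication R S M \<longleftrightarrow>
     (\<forall>N. submodule N R M \<longrightarrow>
        (\<exists>s\<in>S. \<exists>I. ideal I R \<and> smult_set M s (ann M I) \<subseteq> N \<and> N \<subseteq> ann M I))"

definition S_copure ::
  "('a, 'd) ring_scheme \<Rightarrow> 'a set \<Rightarrow> ('a, 'b, 'c) module_scheme \<Rightarrow> 'b set \<Rightarrow> bool" where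
  "S_copure R S M L \<longleftrightarrow> submodule L R M \<and>
     (\<exists>s\<in>S. \<forall>I. ideal I R \<longrightarrow> smult_set M s (colon M L I) \<subseteq> L <+>\<^bsub>M\<^esub> ann M I)"

text \<open>Quotient module M/K: carrier is the set of cosets K + m, addition is
  set addition, zero is K, scalar action r (K + m) = K + r m.  The ring fields
  mult/one of the record are irrelevant for modules and set to undefined.\<close>
definition quot_module :: "('a, 'b, 'c) module_scheme \<Rightarrow> 'b set \<Rightarrow> ('a, 'b set) module" where
  "quot_module M K =
     \<lparr>carrier = a_rcosets\<^bsub>M\<^esub> K, monoid.mult = undefined, one = undefined,
      zero = K, add = (\<lambda>X Y. X <+>\<^bsub>M\<^esub> Y),
      smult = (\<lambda>r X. K <+>\<^bsub>M\<^esub> smult_set M r X)\<rparr>"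

end

theory Submission
  imports Defs
begin

context module
begin

lemma sub_abel: assumes "submodule K R M" shows "abelian_subgroup K M"
  by (rule abelian_subgroupI3[OF additive_subgroupI[OF submodule.axioms(1)[OF assms]]])
     (unfold_locales)

lemma sub_subset: assumes "submodule K R M" shows "K \<subseteq> carrier M"
  using submoduleE(1)[OF assms] .

lemma qcar: "carrier (quot_module M K) = {K +>\<^bsub>M\<^esub> x | x. x \<in> carrier M}"
  unfolding quot_module_def A_RCOSETS_def' by auto

lemma qadd: assumes "submodule K R M" "x \<in> carrier M" "y \<in> carrier M"
  shows "(K +>\<^bsub>M\<^esub> x) \<oplus>\<^bsub>quot_module M K\<^esub> (K +>\<^bsub>M\<^esub> y) = K +>\<^bsub>M\<^esub> (x \<oplus>\<^bsub>M\<^esub> y)"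
proof -
  interpret K: abelian_subgroup K M by (rule sub_abel[OF assms(1)])
  show ?thesis unfolding quot_module_def using K.a_rcos_sum assms(2,3) by simp
qed

lemma qzero: assumes "submodule K R M"
  shows "\<zero>\<^bsub>quot_module M K\<^esub> = K +>\<^bsub>M\<^esub> \<zero>\<^bsub>M\<^esub>"
proof -
  interpret K: abelian_subgroup K M by (rule sub_abel[OF assms(1)])
  show ?thesis unfolding quot_module_def using K.a_rcos_const by simp
qed

lemma coset_eq_K: assumes "submodule K R M" "x \<in> carrier M"
  shows "(K +>\<^bsub>M\<^esub> x = K) \<longleftrightarrow> x \<in> K"
proof -
  interpret K: abelian_subgroup K M by (rule sub_abel[OF assms(1)])
  show ?thesis using K.a_rcos_const K.a_rcos_self assms(2) by metis
qed

lemma qsmult: assumes "submodule K R M" "r \<in> carrier R" "x \<in> carrier M"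
  shows "r \<odot>\<^bsub>quot_module M K\<^esub> (K +>\<^bsub>M\<^esub> x) = K +>\<^bsub>M\<^esub> (r \<odot>\<^bsub>M\<^esub> x)"
proof -
  have Ks: "K \<subseteq> carrier M" using sub_subset[OF assms(1)] .
  have "K <+>\<^bsub>M\<^esub> smult_set M r (K +>\<^bsub>M\<^esub> x) = K +>\<^bsub>M\<^esub> (r \<odot>\<^bsub>M\<^esub> x)"
  proof (rule equalityI; rule subsetI)
    fix z assume "z \<in> K <+>\<^bsub>M\<^esub> smult_set M r (K +>\<^bsub>M\<^esub> x)"
    then obtain k h where k: "k \<in> K" and h: "h \<in> K" and z: "z = k \<oplus>\<^bsub>M\<^esub> (r \<odot>\<^bsub>M\<^esub> (h \<oplus>\<^bsub>M\<^esub> x))"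
      unfolding set_add_def' a_r_coset_def' smult_set_def by auto
    have kc: "k \<in> carrier M" "h \<in> carrier M" using k h Ks by auto
    have "z = (k \<oplus>\<^bsub>M\<^esub> r \<odot>\<^bsub>M\<^esub> h) \<oplus>\<^bsub>M\<^esub> (r \<odot>\<^bsub>M\<^esub> x)"
      using z kc assms smult_r_distr M.add.m_assoc by simp
    moreover have "k \<oplus>\<^bsub>M\<^esub> r \<odot>\<^bsub>M\<^esub> h \<in> K"
      using submoduleE(4,5)[OF assms(1)] k h assms(2) by simp
    ultimately show "z \<in> K +>\<^bsub>M\<^esub> (r \<odot>\<^bsub>M\<^esub> x)" unfolding a_r_coset_def' by auto
  next
    fix z assume "z \<in> K +>\<^bsub>M\<^esub> (r \<odot>\<^bsub>M\<^esub> x)"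
    then obtain k where k: "k \<in> K" and z: "z = k \<oplus>\<^bsub>M\<^esub> (r \<odot>\<^bsub>M\<^esub> x)"
      unfolding a_r_coset_def' by auto
    have "\<zero>\<^bsub>M\<^esub> \<in> K" using submodule.axioms(1)[OF assms(1)] subgroup.one_closed by fastforce
    moreover have "r \<odot>\<^bsub>M\<^esub> (\<zero>\<^bsub>M\<^esub> \<oplus>\<^bsub>M\<^esub> x) = r \<odot>\<^bsub>M\<^esub> x" using assms by simp
    ultimately show "z \<in> K <+>\<^bsub>M\<^esub> smult_set M r (K +>\<^bsub>M\<^esub> x)"
      unfolding set_add_def' a_r_coset_def' smult_set_def using k z by force
  qed
  then show ?thesis unfolding quot_module_def by simp
qed


lemma qabel: assumes KS: "submodule K R M" shows "abelian_group (quot_module M K)"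
proof -
  interpret K: abelian_subgroup K M by (rule sub_abel[OF KS])
  have C: "\<And>X. X \<in> carrier (quot_module M K) \<Longrightarrow> \<exists>x\<in>carrier M. X = K +>\<^bsub>M\<^esub> x"
    using qcar by auto
  have I: "K +>\<^bsub>M\<^esub> x \<in> carrier (quot_module M K)" if "x \<in> carrier M" for x
    using qcar that by auto
  note A = qadd[OF KS]
  show ?thesis
  proof (rule abelian_groupI)
    fix X Y assume "X \<in> carrier (quot_module M K)" "Y \<in> carrier (quot_module M K)"
    then obtain x y where "x \<in> carrier M" "y \<in> carrier M" "X = K +>\<^bsub>M\<^esub> x" "Y = K +>\<^bsub>M\<^esub> y"
      using C by blast
    then show "X \<oplus>\<^bsub>quot_module M K\<^esub> Y \<in> carrier (quot_module M K)"
      and "X \<oplus>\<^bsub>quot_module M K\<^esub> Y = Y \<oplus>\<^bsub>quot_module M K\<^esub> X"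
      using A I M.add.m_comm by auto
  next
    show "\<zero>\<^bsub>quot_module M K\<^esub> \<in> carrier (quot_module M K)" using qzero[OF KS] I by simp
  next
    fix X Y Z assume "X \<in> carrier (quot_module M K)" "Y \<in> carrier (quot_module M K)"
       "Z \<in> carrier (quot_module M K)"
    then obtain x y z where "x \<in> carrier M" "y \<in> carrier M" "z \<in> carrier M"
      "X = K +>\<^bsub>M\<^esub> x" "Y = K +>\<^bsub>M\<^esub> y" "Z = K +>\<^bsub>M\<^esub> z"
      using C by meson
    then show "X \<oplus>\<^bsub>quot_module M K\<^esub> Y \<oplus>\<^bsub>quot_module M K\<^esub> Z =
      X \<oplus>\<^bsub>quot_module M K\<^esub> (Y \<oplus>\<^bsub>quot_module M K\<^esub> Z)"
      using A M.add.m_assoc by simp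
  next
    fix X assume "X \<in> carrier (quot_module M K)"
    then obtain x where x: "x \<in> carrier M" "X = K +>\<^bsub>M\<^esub> x" using C by blast
    then show "\<zero>\<^bsub>quot_module M K\<^esub> \<oplus>\<^bsub>quot_module M K\<^esub> X = X"
      using A qzero[OF KS] by simp
    have "(K +>\<^bsub>M\<^esub> (\<ominus>\<^bsub>M\<^esub> x)) \<oplus>\<^bsub>quot_module M K\<^esub> X = \<zero>\<^bsub>quot_module M K\<^esub>"
      using A qzero[OF KS] x M.l_neg by simp
    then show "\<exists>y\<in>carrier (quot_module M K). y \<oplus>\<^bsub>quot_module M K\<^esub> X = \<zero>\<^bsub>quot_module M K\<^esub>"
      using I x by blast
  qed
qed

lemma qmodule: assumes KS: "submodule K R M" shows "module R (quot_module M K)"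
proof -
  have C: "\<And>X. X \<in> carrier (quot_module M K) \<Longrightarrow> \<exists>x\<in>carrier M. X = K +>\<^bsub>M\<^esub> x"
    using qcar by auto
  have I: "K +>\<^bsub>M\<^esub> x \<in> carrier (quot_module M K)" if "x \<in> carrier M" for x
    using qcar that by auto
  note A = qadd[OF KS] and S = qsmult[OF KS]
  show ?thesis
  proof (rule moduleI)
    show "cring R" by unfold_locales
    show "abelian_group (quot_module M K)" by (rule qabel[OF KS])
  next
    fix a X assume a: "a \<in> carrier R" and "X \<in> carrier (quot_module M K)"
    then obtain x where x: "x \<in> carrier M" "X = K +>\<^bsub>M\<^esub> x" using C by blast
    show "a \<odot>\<^bsub>quot_module M K\<^esub> X \<in> carrier (quot_module M K)"
      unfolding x(2) S[OF a x(1)] using I a x(1) by simp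
  next
    fix a b X assume a: "a \<in> carrier R" and b: "b \<in> carrier R" and "X \<in> carrier (quot_module M K)"
    then obtain x where x: "x \<in> carrier M" "X = K +>\<^bsub>M\<^esub> x" using C by blast
    show "(a \<oplus>\<^bsub>R\<^esub> b) \<odot>\<^bsub>quot_module M K\<^esub> X =
       a \<odot>\<^bsub>quot_module M K\<^esub> X \<oplus>\<^bsub>quot_module M K\<^esub> b \<odot>\<^bsub>quot_module M K\<^esub> X"
      unfolding x(2) S[OF a x(1)] S[OF b x(1)] S[OF R.add.m_closed[OF a b] x(1)]
      using A[of "a \<odot>\<^bsub>M\<^esub> x" "b \<odot>\<^bsub>M\<^esub> x"] smult_l_distr[OF a b x(1)] a b x(1) by simp
    show "(a \<otimes>\<^bsub>R\<^esub> b) \<odot>\<^bsub>quot_module M K\<^esub> X = a \<odot>\<^bsub>quot_module M K\<^esub> (b \<odot>\<^bsub>quot_module M K\<^esub> X)"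
      unfolding x(2) S[OF b x(1)] S[OF R.m_closed[OF a b] x(1)] S[OF a smult_closed[OF b x(1)]]
      using smult_assoc1[OF a b x(1)] by simp
  next
    fix a X Y assume a: "a \<in> carrier R" and "X \<in> carrier (quot_module M K)" "Y \<in> carrier (quot_module M K)"
    then obtain x y where x: "x \<in> carrier M" "X = K +>\<^bsub>M\<^esub> x" and y: "y \<in> carrier M" "Y = K +>\<^bsub>M\<^esub> y"
      using C by meson
    show "a \<odot>\<^bsub>quot_module M K\<^esub> (X \<oplus>\<^bsub>quot_module M K\<^esub> Y) =
       a \<odot>\<^bsub>quot_module M K\<^esub> X \<oplus>\<^bsub>quot_module M K\<^esub> a \<odot>\<^bsub>quot_module M K\<^esub> Y"
      unfolding x(2) y(2) A[OF x(1) y(1)] S[OF a x(1)] S[OF a y(1)] S[OF a M.add.m_closed[OF x(1) y(1)]]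
      using A[of "a \<odot>\<^bsub>M\<^esub> x" "a \<odot>\<^bsub>M\<^esub> y"] smult_r_distr[OF a x(1) y(1)] a x(1) y(1) by simp
  next
    fix X assume "X \<in> carrier (quot_module M K)"
    then obtain x where x: "x \<in> carrier M" "X = K +>\<^bsub>M\<^esub> x" using C by blast
    show "\<one>\<^bsub>R\<^esub> \<odot>\<^bsub>quot_module M K\<^esub> X = X"
      unfolding x(2) S[OF R.one_closed x(1)] using x(1) by simp
  qed
qed


lemma smult_sub: assumes NS: "submodule N R M" and sR: "s \<in> carrier R"
  shows "submodule (smult_set M s N) R M"
proof -
  have Nc: "N \<subseteq> carrier M" using submoduleE(1)[OF NS] .
  note Nadd = submoduleE(5)[OF NS] and Nsm = submoduleE(4)[OF NS] and Ninv = submoduleE(3)[OF NS]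
  have N0: "\<zero>\<^bsub>M\<^esub> \<in> N" using submodule.axioms(1)[OF NS] subgroup.one_closed by fastforce
  show ?thesis
  proof (rule submoduleI)
    show "smult_set M s N \<subseteq> carrier M" using Nc sR unfolding smult_set_def by auto
    show "\<zero>\<^bsub>M\<^esub> \<in> smult_set M s N" unfolding smult_set_def
      using N0 sR by (auto intro!: image_eqI[of _ _ "\<zero>\<^bsub>M\<^esub>"])
  next
    fix a assume "a \<in> smult_set M s N"
    then obtain n where n: "n \<in> N" "a = s \<odot>\<^bsub>M\<^esub> n" unfolding smult_set_def by auto
    have "\<ominus>\<^bsub>M\<^esub> a = s \<odot>\<^bsub>M\<^esub> (\<ominus>\<^bsub>M\<^esub> n)"
      using n Nc sR by (simp add: smult_r_minus subsetD)
    then show "\<ominus>\<^bsub>M\<^esub> a \<in> smult_set M s N" unfolding smult_set_def using Ninv n(1) by auto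
  next
    fix a b assume "a \<in> smult_set M s N" "b \<in> smult_set M s N"
    then obtain n m where n: "n \<in> N" "a = s \<odot>\<^bsub>M\<^esub> n" and m: "m \<in> N" "b = s \<odot>\<^bsub>M\<^esub> m"
      unfolding smult_set_def by auto
    have "a \<oplus>\<^bsub>M\<^esub> b = s \<odot>\<^bsub>M\<^esub> (n \<oplus>\<^bsub>M\<^esub> m)"
      using n m Nc sR by (simp add: smult_r_distr subsetD)
    then show "a \<oplus>\<^bsub>M\<^esub> b \<in> smult_set M s N" unfolding smult_set_def using Nadd n(1) m(1) by auto
  next
    fix a x assume a: "a \<in> carrier R" and "x \<in> smult_set M s N"
    then obtain n where n: "n \<in> N" "x = s \<odot>\<^bsub>M\<^esub> n" unfolding smult_set_def by auto
    have nc: "n \<in> carrier M" using n Nc by auto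
    have "a \<odot>\<^bsub>M\<^esub> x = (a \<otimes> s) \<odot>\<^bsub>M\<^esub> n" using smult_assoc1[OF a sR nc] n by simp
    also have "\<dots> = s \<odot>\<^bsub>M\<^esub> (a \<odot>\<^bsub>M\<^esub> n)" using smult_assoc1[OF sR a nc] R.m_comm[OF a sR] by simp
    finally show "a \<odot>\<^bsub>M\<^esub> x \<in> smult_set M s N" unfolding smult_set_def using Nsm[OF a n(1)] by auto
  qed
qed

end

theorem theorem3p4:
  fixes R :: "('a, 'd) ring_scheme" and M :: "('a, 'b, 'c) module_scheme"
  assumes "cring R" and "\<one>\<^bsub>R\<^esub> \<noteq> \<zero>\<^bsub>R\<^esub>"
    and "module R M"
    and "mcs R S"
    and "S_comultiplication R S M"
    and "S_copure R S M N"
    and "s \<in> S"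
  shows "module R (quot_module M (smult_set M s N)) \<and>
         S_comultiplication R S (quot_module M (smult_set M s N))"
proof -
  interpret R: cring R by (rule assms(1))
  interpret M: module R M by (rule assms(3))
  have SR: "S \<subseteq> carrier R" and Smul: "\<And>a b. a \<in> S \<Longrightarrow> b \<in> S \<Longrightarrow> a \<otimes>\<^bsub>R\<^esub> b \<in> S"
    using assms(4) unfolding mcs_def by auto
  obtain u where NS: "submodule N R M" and uS: "u \<in> S"
    and cop: "\<And>I. ideal I R \<Longrightarrow> smult_set M u (colon M N I) \<subseteq> N <+>\<^bsub>M\<^esub> ann M I"
    using assms(6) unfolding S_copure_def by blast
  have sR: "s \<in> carrier R" using SR assms(7) by auto
  have uR: "u \<in> carrier R" using SR uS by auto
  define K where "K = smult_set M s N"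
  have KS: "submodule K R M" unfolding K_def by (rule M.smult_sub[OF NS sR])
  have Kc: "K \<subseteq> carrier M" using M.submoduleE(1)[OF KS] .
  have Nc: "N \<subseteq> carrier M" using M.submoduleE(1)[OF NS] .
  have KN: "K \<subseteq> N" unfolding K_def smult_set_def using M.submoduleE(4)[OF NS sR] by auto
  define Q where "Q = quot_module M K"
  have QM: "module R Q" unfolding Q_def by (rule M.qmodule[OF KS])
  interpret Q: module R Q by (rule QM)
  have QC: "\<And>X. X \<in> carrier Q \<Longrightarrow> \<exists>x\<in>carrier M. X = K +>\<^bsub>M\<^esub> x"
    unfolding Q_def using M.qcar by auto
  have QS: "\<And>r x. r \<in> carrier R \<Longrightarrow> x \<in> carrier M \<Longrightarrow> r \<odot>\<^bsub>Q\<^esub> (K +>\<^bsub>M\<^esub> x) = K +>\<^bsub>M\<^esub> (r \<odot>\<^bsub>M\<^esub> x)"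
    unfolding Q_def using M.qsmult[OF KS] by auto
  have QA: "\<And>x y. x \<in> carrier M \<Longrightarrow> y \<in> carrier M \<Longrightarrow>
      (K +>\<^bsub>M\<^esub> x) \<oplus>\<^bsub>Q\<^esub> (K +>\<^bsub>M\<^esub> y) = K +>\<^bsub>M\<^esub> (x \<oplus>\<^bsub>M\<^esub> y)"
    unfolding Q_def using M.qadd[OF KS] by auto
  have QZ: "\<zero>\<^bsub>Q\<^esub> = K" unfolding Q_def quot_module_def by simp
  have KE: "\<And>x. x \<in> carrier M \<Longrightarrow> (K +>\<^bsub>M\<^esub> x = K) \<longleftrightarrow> x \<in> K"
    using M.coset_eq_K[OF KS] by auto
  have K0: "K +>\<^bsub>M\<^esub> \<zero>\<^bsub>M\<^esub> = K"
  proof -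
    have "\<zero>\<^bsub>M\<^esub> \<in> K" using submodule.axioms(1)[OF KS] subgroup.one_closed by fastforce
    then show ?thesis using KE by simp
  qed
  have "S_comultiplication R S Q"
    unfolding S_comultiplication_def
  proof (intro allI impI)
    fix LL assume LS: "submodule LL R Q"
    have LLc: "LL \<subseteq> carrier Q" using Q.submoduleE(1)[OF LS] .
    note LLadd = Q.submoduleE(5)[OF LS] and LLsm = Q.submoduleE(4)[OF LS]
    have LLK: "K \<in> LL"
    proof -
      obtain X where X: "X \<in> LL" using Q.submoduleE(2)[OF LS] by auto
      then obtain x where x: "x \<in> carrier M" "X = K +>\<^bsub>M\<^esub> x" using QC LLc by blast
      have "\<zero>\<^bsub>R\<^esub> \<odot>\<^bsub>Q\<^esub> X \<in> LL" using LLsm X by simp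
      then show ?thesis using x QS K0 by simp
    qed
    define L where "L = {m \<in> carrier M. K +>\<^bsub>M\<^esub> m \<in> LL}"
    have LSub: "submodule L R M"
    proof (rule M.submoduleI)
      show "L \<subseteq> carrier M" unfolding L_def by auto
      show "\<zero>\<^bsub>M\<^esub> \<in> L" unfolding L_def using K0 LLK by simp
    next
      fix a assume a: "a \<in> L"
      then have ac: "a \<in> carrier M" "K +>\<^bsub>M\<^esub> a \<in> LL" unfolding L_def by auto
      have "(\<ominus>\<^bsub>R\<^esub> \<one>\<^bsub>R\<^esub>) \<odot>\<^bsub>M\<^esub> a = \<ominus>\<^bsub>M\<^esub> a"
        using M.smult_l_minus[OF R.one_closed ac(1)] ac(1) by simp
      moreover have "(\<ominus>\<^bsub>R\<^esub> \<one>\<^bsub>R\<^esub>) \<odot>\<^bsub>Q\<^esub> (K +>\<^bsub>M\<^esub> a) \<in> LL"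
        using LLsm ac(2) by simp
      ultimately show "\<ominus>\<^bsub>M\<^esub> a \<in> L" unfolding L_def using QS[OF _ ac(1), of "\<ominus>\<^bsub>R\<^esub> \<one>\<^bsub>R\<^esub>"] ac(1)
        by simp
    next
      fix a b assume "a \<in> L" "b \<in> L"
      then have "a \<in> carrier M" "b \<in> carrier M" "K +>\<^bsub>M\<^esub> a \<in> LL" "K +>\<^bsub>M\<^esub> b \<in> LL"
        unfolding L_def by auto
      then show "a \<oplus>\<^bsub>M\<^esub> b \<in> L" unfolding L_def using LLadd[of "K +>\<^bsub>M\<^esub> a" "K +>\<^bsub>M\<^esub> b"] QA[of a b] by simp
    next
      fix r a assume r: "r \<in> carrier R" and "a \<in> L"
      then have "a \<in> carrier M" "K +>\<^bsub>M\<^esub> a \<in> LL" unfolding L_def by auto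
      then show "r \<odot>\<^bsub>M\<^esub> a \<in> L" unfolding L_def using LLsm[OF r, of "K +>\<^bsub>M\<^esub> a"] QS[OF r, of a] r by simp
    qed
    note Ladd = M.submoduleE(5)[OF LSub] and Lsm = M.submoduleE(4)[OF LSub]
    have KL: "K \<subseteq> L"
    proof
      fix x assume x: "x \<in> K"
      then have "x \<in> carrier M" using Kc by blast
      moreover have "K +>\<^bsub>M\<^esub> x = K" using KE x \<open>x \<in> carrier M\<close> by blast
      ultimately show "x \<in> L" unfolding L_def using LLK by simp
    qed
    obtain t I where tS: "t \<in> S" and I: "ideal I R" and t1: "smult_set M t (ann M I) \<subseteq> L"
      and t2: "L \<subseteq> ann M I"
      using assms(5) LSub unfolding S_comultiplication_def by meson
    have tR: "t \<in> carrier R" using tS SR by auto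
    have IR: "\<And>a. a \<in> I \<Longrightarrow> a \<in> carrier R" using ideal.Icarr[OF I] by auto
    define t' where "t' = t \<otimes>\<^bsub>R\<^esub> (s \<otimes>\<^bsub>R\<^esub> u)"
    have t'S: "t' \<in> S" unfolding t'_def using Smul tS assms(7) uS by auto
    have annQ: "ann Q I = {X \<in> carrier Q. \<forall>a\<in>I. a \<odot>\<^bsub>Q\<^esub> X = K}"
      unfolding ann_def colon_def QZ by blast
    have "smult_set Q t' (ann Q I) \<subseteq> LL"
    proof
      fix Y assume "Y \<in> smult_set Q t' (ann Q I)"
      then obtain X where X: "X \<in> ann Q I" "Y = t' \<odot>\<^bsub>Q\<^esub> X" unfolding smult_set_def by auto
      then obtain x where x: "x \<in> carrier M" "X = K +>\<^bsub>M\<^esub> x" using QC annQ X(1) by blast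
      have axK: "a \<odot>\<^bsub>M\<^esub> x \<in> K" if "a \<in> I" for a
        using X(1) annQ x QS[OF IR[OF that] x(1)] KE[of "a \<odot>\<^bsub>M\<^esub> x"] IR[OF that] that by auto
      have xc: "x \<in> colon M N I" unfolding colon_def using x(1) axK KN by auto
      then have "u \<odot>\<^bsub>M\<^esub> x \<in> N <+>\<^bsub>M\<^esub> ann M I" using cop[OF I] unfolding smult_set_def by auto
      then obtain n z where n: "n \<in> N" and z: "z \<in> ann M I" and uxe: "u \<odot>\<^bsub>M\<^esub> x = n \<oplus>\<^bsub>M\<^esub> z"
        unfolding set_add_def' by auto
      have nc: "n \<in> carrier M" using n Nc by auto
      have zc: "z \<in> carrier M" and za: "\<And>a. a \<in> I \<Longrightarrow> a \<odot>\<^bsub>M\<^esub> z = \<zero>\<^bsub>M\<^esub>"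
        using z unfolding ann_def colon_def by auto
      have "t' \<odot>\<^bsub>M\<^esub> x = t \<odot>\<^bsub>M\<^esub> (s \<odot>\<^bsub>M\<^esub> (u \<odot>\<^bsub>M\<^esub> x))"
        unfolding t'_def using M.smult_assoc1 tR sR uR x(1) by simp
      also have "\<dots> = t \<odot>\<^bsub>M\<^esub> (s \<odot>\<^bsub>M\<^esub> n) \<oplus>\<^bsub>M\<^esub> t \<odot>\<^bsub>M\<^esub> (s \<odot>\<^bsub>M\<^esub> z)"
        unfolding uxe using M.smult_r_distr tR sR nc zc by simp
      finally have te: "t' \<odot>\<^bsub>M\<^esub> x = t \<odot>\<^bsub>M\<^esub> (s \<odot>\<^bsub>M\<^esub> n) \<oplus>\<^bsub>M\<^esub> t \<odot>\<^bsub>M\<^esub> (s \<odot>\<^bsub>M\<^esub> z)" .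
      have snK: "s \<odot>\<^bsub>M\<^esub> n \<in> K" unfolding K_def smult_set_def using n by auto
      have p1: "t \<odot>\<^bsub>M\<^esub> (s \<odot>\<^bsub>M\<^esub> n) \<in> L" using Lsm[OF tR] snK KL by auto
      have szann: "s \<odot>\<^bsub>M\<^esub> z \<in> ann M I"
        unfolding ann_def colon_def
      proof (intro CollectI conjI ballI)
        show "s \<odot>\<^bsub>M\<^esub> z \<in> carrier M" using sR zc by simp
        fix a assume a: "a \<in> I"
        have "a \<odot>\<^bsub>M\<^esub> (s \<odot>\<^bsub>M\<^esub> z) = (a \<otimes>\<^bsub>R\<^esub> s) \<odot>\<^bsub>M\<^esub> z" using M.smult_assoc1 IR[OF a] sR zc by simp
        also have "\<dots> = s \<odot>\<^bsub>M\<^esub> (a \<odot>\<^bsub>M\<^esub> z)" using M.smult_assoc1[OF sR IR[OF a] zc] R.m_comm[OF IR[OF a] sR] by simp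
        also have "\<dots> = \<zero>\<^bsub>M\<^esub>" using za[OF a] sR by simp
        finally show "a \<odot>\<^bsub>M\<^esub> (s \<odot>\<^bsub>M\<^esub> z) \<in> {\<zero>\<^bsub>M\<^esub>}" by simp
      qed
      have p2: "t \<odot>\<^bsub>M\<^esub> (s \<odot>\<^bsub>M\<^esub> z) \<in> L" using t1 szann unfolding smult_set_def by auto
      have "t' \<odot>\<^bsub>M\<^esub> x \<in> L" using te Ladd[OF p1 p2] by simp
      moreover have t'R: "t' \<in> carrier R" using t'S SR by auto
      ultimately show "Y \<in> LL" using X(2) x QS[OF t'R x(1)] unfolding L_def by simp
    qed
    moreover have "LL \<subseteq> ann Q I"
    proof
      fix X assume X: "X \<in> LL"
      then obtain x where x: "x \<in> carrier M" "X = K +>\<^bsub>M\<^esub> x" using QC LLc by blast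
      then have "x \<in> L" unfolding L_def using X by auto
      then have "x \<in> ann M I" using t2 by auto
      then have "\<forall>a\<in>I. a \<odot>\<^bsub>M\<^esub> x = \<zero>\<^bsub>M\<^esub>" unfolding ann_def colon_def by auto
      then show "X \<in> ann Q I" unfolding annQ using X LLc x QS IR K0 by auto
    qed
    ultimately show "\<exists>s\<in>S. \<exists>I. ideal I R \<and> smult_set Q s (ann Q I) \<subseteq> LL \<and> LL \<subseteq> ann Q I"
      using t'S I by blast
  qed
  then show ?thesis using QM unfolding Q_def K_def by simp
qed

end
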